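(* Every Abel sequentially compact subset of $\mathbb{R}$ is $\delta$-ward compact.
   Context: A sequence $(p_n)_{n\ge0}$ is Abel convergent to $\ell$ if $\sum_{k=0}^{\infty}p_k x^k$ converges for every $0\le x<1$ and $\lim_{x\to 1^-}(1-x)\sum_{k=0}^{\infty}p_k x^k=\ell$. A subset $F\subseteq\mathbb{R}$ is Abel sequentially compact if every sequence of points of $F$ has a subsequence Abel convergent to a limit belonging to $F$. A sequence $(p_n)$ is $\delta$-quasi-Cauchy if $\lim_{n\to\infty}\big((p_{n+2}-p_{n+1})-(p_{n+1}-p_n)\big)=0$, i.e. the sequence of differences $(p_{n+1}-p_n)$ is quasi-Cauchy. A subset $E\subseteq\mathbb{R}$ is $\delta$-ward compact if every sequence of points of $E$ has a $\delta$-quasi-Cauchy subsequence. *)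

theory Defs
  imports "HOL-Analysis.Analysis"
begin

definition abel_convergent :: "(nat \<Rightarrow> real) \<Rightarrow> real \<Rightarrow> bool" where
  "abel_convergent p l \<longleftrightarrow>
     (\<forall>x. 0 \<le> x \<and> x < 1 \<longrightarrow> summable (\<lambda>k. p k * x ^ k)) \<and>
     ((\<lambda>x. (1 - x) * (\<Sum>k. p k * x ^ k)) \<longlongrightarrow> l) (at_left 1)"

definition abel_seq_compact :: "real set \<Rightarrow> bool" where
  "abel_seq_compact F \<longleftrightarrow>
     (\<forall>p. (\<forall>n. p n \<in> F) \<longrightarrow>
        (\<exists>(r::nat \<Rightarrow> nat) l. strict_mono r \<and> l \<in> F \<and> abel_convergent (p \<circ> r) l))"

definition delta_quasi_cauchy :: "(nat \<Rightarrow> real) \<Rightarrow> bool" where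
  "delta_quasi_cauchy p \<longleftrightarrow>
     (\<lambda>n. (p (n + 2) - p (n + 1)) - (p (n + 1) - p n)) \<longlonglongrightarrow> 0"

definition delta_ward_compact :: "real set \<Rightarrow> bool" where
  "delta_ward_compact E \<longleftrightarrow>
     (\<forall>p. (\<forall>n. p n \<in> E) \<longrightarrow>
        (\<exists>r::nat \<Rightarrow> nat. strict_mono r \<and> delta_quasi_cauchy (p \<circ> r)))"

end

theory Submission
  imports Defs
begin

lemma abel_bounded:
  fixes F :: "real set"
  assumes A: "abel_seq_compact F"
  shows "bounded F"
proof (rule ccontr)
  assume nb: "\<not> bounded F"
  have "\<forall>n. \<exists>y\<in>F. 2 ^ n \<le> \<bar>y\<bar>"
  proof
    fix n :: nat
    from nb have "\<not> (\<forall>y\<in>F. \<bar>y\<bar> \<le> 2 ^ n)"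
      by (metis bounded_real)
    then show "\<exists>y\<in>F. 2 ^ n \<le> \<bar>y\<bar>" by force
  qed
  then obtain p where p: "\<And>n. p n \<in> F" "\<And>n. (2::real) ^ n \<le> \<bar>p n\<bar>"
    by metis
  from A p(1) obtain r l where r: "strict_mono r" and ac: "abel_convergent (p \<circ> r) l"
    unfolding abel_seq_compact_def by blast
  have s: "summable (\<lambda>k. (p \<circ> r) k * (1/2) ^ k)"
    using ac unfolding abel_convergent_def by auto
  hence "(\<lambda>k. (p \<circ> r) k * (1/2) ^ k) \<longlonglongrightarrow> 0" by (rule summable_LIMSEQ_zero)
  hence "eventually (\<lambda>k. \<bar>(p \<circ> r) k * (1/2) ^ k\<bar> < 1) sequentially"
    by (metis (no_types, lifting) LIMSEQ_D abs_minus_cancel diff_zero real_norm_def zero_less_one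
        eventually_sequentially)
  then obtain k where k: "\<bar>(p \<circ> r) k * (1/2) ^ k\<bar> < 1"
    by (meson eventually_sequentially order_refl)
  have "k \<le> r k" using r by (simp add: seq_suble)
  hence "(2::real) ^ k \<le> 2 ^ r k" by simp
  also have "\<dots> \<le> \<bar>p (r k)\<bar>" by (rule p(2))
  finally have "1 \<le> \<bar>p (r k)\<bar> * (1/2) ^ k"
    by (simp add: power_one_over field_simps)
  with k show False by (simp add: abs_mult)
qed

theorem corollary20:
  fixes F :: "real set"
  assumes "abel_seq_compact F"
  shows "delta_ward_compact F"
  unfolding delta_ward_compact_def
proof (intro allI impI)
  fix p :: "nat \<Rightarrow> real" assume p: "\<forall>n. p n \<in> F"
  have "bounded (range p)"
    using abel_bounded[OF assms] p by (meson bounded_subset image_subset_iff)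
  then obtain l and r :: "nat \<Rightarrow> nat" where r: "strict_mono r" and c: "(p \<circ> r) \<longlonglongrightarrow> l"
    using bounded_imp_convergent_subsequence by blast
  have c1: "(\<lambda>n. (p \<circ> r) (n + 1)) \<longlonglongrightarrow> l" using c by (rule LIMSEQ_ignore_initial_segment)
  have c2: "(\<lambda>n. (p \<circ> r) (n + 2)) \<longlonglongrightarrow> l" using c by (rule LIMSEQ_ignore_initial_segment)
  have "(\<lambda>n. ((p \<circ> r) (n + 2) - (p \<circ> r) (n + 1)) - ((p \<circ> r) (n + 1) - (p \<circ> r) n)) \<longlonglongrightarrow> (l - l) - (l - l)"
    by (intro tendsto_intros c c1 c2)
  hence "delta_quasi_cauchy (p \<circ> r)" unfolding delta_quasi_cauchy_def by simp
  with r show "\<exists>r. strict_mono r \<and> delta_quasi_cauchy (p \<circ> r)" by blast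
qed

end
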